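(* Let $(X_k)_{k\ge1}$ be nonnegative random variables (interarrival times) with $S_0=0$, $S_k=X_1+\dots+X_k$, and counting process $N(t)=\max\{k:S_k\le t\}$, $t\ge0$. Let $T$ be a nonnegative random variable independent of $(X_k)_{k\ge1}$. Assume: (a) $T$ is DFR; (b) $T$ and $X_1$ do not both have positive probability mass at $0$; (c) for each $n=1,2,\dots$ there exist a Borel set $N_n\subseteq\mathbb R_+^n$ with $P((X_1,\dots,X_n)\in N_n)=1$ and an $N_n$-distributional version $\{Z^{\mathbf x}_{n+1}:\mathbf x\in N_n\}$ of $X_{n+1}$ given $(X_1,\dots,X_n)$ such that (c.1) $Z_2^{x_1}\le_{ST}X_1$ for all $x_1\in N_1$; (c.2) for $n=1,2,\dots$, $N_{n+1}\subseteq N_n\times\mathbb R_+$ and $Z^{(\mathbf x,x_{n+1})}_{n+2}\le_{ST}Z^{\mathbf x}_{n+1}$ for all $(\mathbf x,x_{n+1})\in N_{n+1}$. Then $N(T)$ is discrete DFR.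
   Context: A nonnegative random variable with survival function $\overline G$ is DFR if for every $z\ge0$ the map $t\mapsto\overline G(z+t)/\overline G(t)$ is increasing (on $\{t:\overline G(t)>0\}$). A random variable $N$ with values in $\{0,1,2,\dots\}$ is discrete DFR if $P(N\ge n+1)^2\le P(N\ge n)P(N\ge n+2)$ for all $n=0,1,2,\dots$. $X\le_{ST}Y$ means $P(X>t)\le P(Y>t)$ for all real $t$. Let $F_n$ be the law of $(X_1,\dots,X_n)$. A family $\{\mu^{\mathbf x}:\mathbf x\in N_n\}$ of probability measures on $\mathbb R_+$, with $\mathbf x\mapsto\mu^{\mathbf x}(B)$ measurable for each Borel $B$, is an $N_n$ regular conditional distribution of $X_{n+1}$ given $(X_1,\dots,X_n)$ if $P((X_1,\dots,X_n)\in A,X_{n+1}\in B)=\int_A\mu^{\mathbf x}(B)\,dF_n(\mathbf x)$ for all Borel $A\subseteq N_n$, $B\subseteq\mathbb R_+$; an $N_n$-distributional version of $X_{n+1}$ given $(X_1,\dots,X_n)$ is a family of random variables $\{Z^{\mathbf x}_{n+1}:\mathbf x\in N_n\}$ with $Z^{\mathbf x}_{n+1}$ having law $\mu^{\mathbf x}$ for such a regular conditional distribution. *)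

theory Defs
  imports "HOL-Probability.Probability"
begin

definition survival :: "'a measure \<Rightarrow> ('a \<Rightarrow> real) \<Rightarrow> real \<Rightarrow> real" where
  "survival M T t = measure M {\<omega>\<in>space M. T \<omega> > t}"

definition DFR :: "'a measure \<Rightarrow> ('a \<Rightarrow> real) \<Rightarrow> bool" where
  "DFR M T \<longleftrightarrow> (\<forall>z\<ge>0. mono_on {t. 0 \<le> t \<and> survival M T t > 0}
      (\<lambda>t. survival M T (z + t) / survival M T t))"

definition discrete_DFR :: "'a measure \<Rightarrow> ('a \<Rightarrow> enat) \<Rightarrow> bool" where
  "discrete_DFR M N \<longleftrightarrow> (\<forall>n::nat.
     (measure M {\<omega>\<in>space M. N \<omega> \<ge> enat (n+1)})\<^sup>2
       \<le> measure M {\<omega>\<in>space M. N \<omega> \<ge> enat n} * measure M {\<omega>\<in>space M. N \<omega> \<ge> enat (n+2)})"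

definition st_le :: "real measure \<Rightarrow> real measure \<Rightarrow> bool" where
  "st_le \<mu> \<nu> \<longleftrightarrow> (\<forall>t. measure \<mu> {t<..} \<le> measure \<nu> {t<..})"

definition partial_sum :: "(nat \<Rightarrow> 'a \<Rightarrow> real) \<Rightarrow> nat \<Rightarrow> 'a \<Rightarrow> real" where
  "partial_sum X k \<omega> = (\<Sum>i\<in>{1..k}. X i \<omega>)"

definition counting :: "(nat \<Rightarrow> 'a \<Rightarrow> real) \<Rightarrow> real \<Rightarrow> 'a \<Rightarrow> enat" where
  "counting X t \<omega> = Sup {enat k | k. partial_sum X k \<omega> \<le> t}"

abbreviation vecM :: "nat \<Rightarrow> (nat \<Rightarrow> real) measure" where
  "vecM n \<equiv> Pi\<^sub>M {1..n} (\<lambda>_. borel)"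

definition first_n :: "(nat \<Rightarrow> 'a \<Rightarrow> real) \<Rightarrow> nat \<Rightarrow> 'a \<Rightarrow> (nat \<Rightarrow> real)" where
  "first_n X n \<omega> = (\<lambda>i\<in>{1..n}. X i \<omega>)"

text \<open>\<mu> is an N_n regular conditional distribution of X_(n+1) given (X_1,...,X_n):
  each \<mu> x (x in N_n) is a probability measure on R_+ (a Borel measure on R with
  no mass on the negatives), x \<mapsto> \<mu> x B is measurable on N_n, and the disintegration
  formula holds for all Borel A \<subseteq> N_n and Borel B \<subseteq> R_+.\<close>
definition N_reg_cond_dist ::
  "'a measure \<Rightarrow> (nat \<Rightarrow> 'a \<Rightarrow> real) \<Rightarrow> nat \<Rightarrow> (nat \<Rightarrow> real) set
     \<Rightarrow> ((nat \<Rightarrow> real) \<Rightarrow> real measure) \<Rightarrow> bool" where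
  "N_reg_cond_dist M X n Nn \<mu> \<longleftrightarrow>
     (\<forall>x\<in>Nn. prob_space (\<mu> x) \<and> sets (\<mu> x) = sets borel \<and> emeasure (\<mu> x) {..<0} = 0)
   \<and> (\<forall>B\<in>sets borel. (\<lambda>x. emeasure (\<mu> x) B) \<in> borel_measurable (restrict_space (vecM n) Nn))
   \<and> (\<forall>A\<in>sets (vecM n). A \<subseteq> Nn \<longrightarrow> (\<forall>B\<in>sets borel. B \<subseteq> {0..} \<longrightarrow>
        emeasure M {\<omega>\<in>space M. first_n X n \<omega> \<in> A \<and> X (Suc n) \<omega> \<in> B}
          = (\<integral>\<^sup>+x. emeasure (\<mu> x) B * indicator A x \<partial>(distr M (vecM n) (first_n X n)))))"

end

theory Submission
  imports Defs
begin



lemma lim_c_over: "(\<lambda>k. c / real (Suc k)) \<longlonglongrightarrow> (0::real)"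
  by (metis (lifting) ext filterlim_sequentially_Suc lim_const_over_n)

locale setting = prob_space M
  for M :: "'a measure" +
  fixes X :: "nat \<Rightarrow> 'a \<Rightarrow> real" and T :: "'a \<Rightarrow> real"
  assumes X_rv: "\<And>k. k \<ge> 1 \<Longrightarrow> X k \<in> borel_measurable M"
    and X_nonneg: "\<And>k \<omega>. k \<ge> 1 \<Longrightarrow> \<omega> \<in> space M \<Longrightarrow> X k \<omega> \<ge> 0"
    and T_rv: "T \<in> borel_measurable M"
    and T_nonneg: "\<And>\<omega>. \<omega> \<in> space M \<Longrightarrow> T \<omega> \<ge> 0"
    and dfr: "DFR M T"
    and indep: "indep_set
                  {T -` A \<inter> space M | A. A \<in> sets borel}
                  {(\<lambda>\<omega>. \<lambda>k\<in>{1::nat..}. X k \<omega>) -` A \<inter> space M | A.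
                      A \<in> sets (Pi\<^sub>M {1::nat..} (\<lambda>_. borel :: real measure))}"
begin

definition H :: "real \<Rightarrow> real" where "H u = measure M {\<omega>\<in>space M. u \<le> T \<omega>}"
abbreviation F :: "real \<Rightarrow> real" where "F \<equiv> survival M T"

lemma F_def': "F t = prob {\<omega>\<in>space M. t < T \<omega>}" by (simp add: survival_def)

lemma F_anti: "a \<le> b \<Longrightarrow> F b \<le> F a"
  unfolding F_def' using T_rv by (intro finite_measure_mono) auto

lemma F_nonneg: "0 \<le> F t" by (simp add: F_def')
lemma F_le1: "F t \<le> 1" by (simp add: F_def')

lemma dfr_cross:
  assumes "0 \<le> t1" "t1 \<le> t2" "0 \<le> z"
  shows "F (t1 + z) * F t2 \<le> F (t2 + z) * F t1"
proof (cases "F t2 > 0")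
  case True
  have "F t1 \<ge> F t2" using F_anti assms by auto
  with True have p1: "F t1 > 0" by auto
  have "mono_on {t. 0 \<le> t \<and> F t > 0} (\<lambda>t. F (z + t) / F t)"
    using dfr assms unfolding DFR_def by auto
  then have "F (z + t1) / F t1 \<le> F (z + t2) / F t2"
    using assms True p1 by (auto simp: mono_on_def)
  with True p1 show ?thesis by (simp add: field_simps add.commute)
next
  case False
  then have "F t2 = 0" using F_nonneg[of t2] by auto
  then show ?thesis using F_nonneg by simp
qed

lemma H_lim:
  assumes c: "c > 0"
  shows "(\<lambda>k. F (u - c / real (Suc k))) \<longlonglongrightarrow> H u"
proof -
  define A where "A k = {\<omega>\<in>space M. u - c / real (Suc k) < T \<omega>}" for k
  have "range A \<subseteq> sets M" unfolding A_def using T_rv by auto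
  moreover have "decseq A"
  proof (rule decseq_SucI)
    fix k have "c / real (Suc (Suc k)) \<le> c / real (Suc k)" using c
      by (intro divide_left_mono) auto
    then show "A (Suc k) \<subseteq> A k" unfolding A_def by auto
  qed
  ultimately have "(\<lambda>k. measure M (A k)) \<longlonglongrightarrow> measure M (\<Inter>k. A k)"
    by (intro Lim_measure_decseq) auto
  moreover have "(\<Inter>k. A k) = {\<omega>\<in>space M. u \<le> T \<omega>}"
  proof (auto simp: A_def)
    fix \<omega> k assume "u \<le> T \<omega>"
    moreover have "c / real (Suc k) > 0" using c by auto
    ultimately show "u - c / (1 + real k) < T \<omega>" by auto
  next
    fix \<omega> assume "\<forall>k. u - c / (1 + real k) < T \<omega>"
    show "u \<le> T \<omega>"
    proof (rule ccontr)
      assume "\<not> u \<le> T \<omega>"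
      then have "(u - T \<omega>) / c > 0" using c by auto
      then obtain k where "inverse (real (Suc k)) < (u - T \<omega>) / c"
        using reals_Archimedean by blast
      then have "c / real (Suc k) < u - T \<omega>" using c by (simp add: field_simps)
      with \<open>\<forall>k. _\<close> show False by (smt (verit) of_nat_Suc)
    qed
  qed
  ultimately show ?thesis unfolding A_def H_def F_def' by simp
qed

lemma H_anti: "a \<le> b \<Longrightarrow> H b \<le> H a"
  unfolding H_def using T_rv by (intro finite_measure_mono) auto
lemma H_nonneg: "0 \<le> H t" by (simp add: H_def)
lemma H_le1: "H t \<le> 1" by (simp add: H_def)
lemma H_le0: "u \<le> 0 \<Longrightarrow> H u = 1"
proof -
  assume u: "u \<le> 0"
  have "{\<omega>\<in>space M. u \<le> T \<omega>} = space M" using T_nonneg u by (auto intro: order_trans)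
  then show ?thesis unfolding H_def by (simp add: prob_space)
qed

lemma H_logsup:
  assumes s: "0 \<le> s" and x: "0 \<le> x" and y: "0 \<le> y"
  shows "H (s + x) * H (s + y) \<le> H s * H (s + x + y)"
proof -
  consider "x = 0" | "y = 0" | "x > 0" "y > 0" "s > 0" | "x > 0" "y > 0" "s = 0"
    using s x y by linarith
  then show ?thesis
  proof cases
    case 1 then show ?thesis by simp
  next
    case 2 then show ?thesis by (simp add: mult.commute)
  next
    case 3
    let ?e = "\<lambda>k. 1 / real (Suc k)"
    have e0: "?e \<longlonglongrightarrow> 0" by (rule lim_c_over)
    have ev: "eventually (\<lambda>k. ?e k < s) sequentially"
      using order_tendstoD(2)[OF e0 \<open>s > 0\<close>] .
    have "eventually (\<lambda>k. F ((s + x) - ?e k) * F ((s + y) - ?e k) \<le> F (s - ?e k) * F ((s + x + y) - ?e k)) sequentially"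
      using ev
    proof eventually_elim
      case (elim k)
      have "F ((s - ?e k) + y) * F ((s + x) - ?e k) \<le> F ((s + x - ?e k) + y) * F (s - ?e k)"
        using elim 3 by (intro dfr_cross) auto
      then show ?case by (simp add: algebra_simps)
    qed
    moreover have "(\<lambda>k. F ((s + x) - ?e k) * F ((s + y) - ?e k)) \<longlonglongrightarrow> H (s + x) * H (s + y)"
      by (intro tendsto_mult H_lim) auto
    moreover have "(\<lambda>k. F (s - ?e k) * F ((s + x + y) - ?e k)) \<longlonglongrightarrow> H s * H (s + x + y)"
      by (intro tendsto_mult H_lim) auto
    ultimately show ?thesis by (intro tendsto_le[OF _ _ _ ]) (auto intro: tendsto_le)
  next
    case 4
    let ?e = "\<lambda>k. (1/2) / real (Suc k)"
    have e0: "?e \<longlonglongrightarrow> 0" by (rule lim_c_over)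
    have ev: "eventually (\<lambda>k. ?e k < min x y) sequentially"
      using order_tendstoD(2)[OF e0, of "min x y"] 4 by auto
    have "eventually (\<lambda>k. F (x - ?e k) * F (y - ?e k) \<le> F ((x + y) - 1 / real (Suc k))) sequentially"
      using ev
    proof eventually_elim
      case (elim k)
      have "F (0 + (y - ?e k)) * F (x - ?e k) \<le> F ((x - ?e k) + (y - ?e k)) * F 0"
        using elim 4 by (intro dfr_cross) auto
      also have "\<dots> \<le> F ((x - ?e k) + (y - ?e k))"
        using F_le1[of 0] F_nonneg[of "(x - ?e k) + (y - ?e k)"] by (simp add: mult_left_le)
      also have "(x - ?e k) + (y - ?e k) = (x + y) - 1 / real (Suc k)"
      proof -
        have "?e k + ?e k = 1 / real (Suc k)" by (simp add: field_simps)
        then show ?thesis by linarith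
      qed
      finally show ?case by (simp add: mult.commute)
    qed
    moreover have "(\<lambda>k. F (x - ?e k) * F (y - ?e k)) \<longlonglongrightarrow> H x * H y"
      by (intro tendsto_mult H_lim) auto
    moreover have "(\<lambda>k. F ((x + y) - 1 / real (Suc k))) \<longlonglongrightarrow> H (x + y)"
      by (intro H_lim) auto
    ultimately have "H x * H y \<le> H (x + y)"
      using tendsto_le[OF trivial_limit_sequentially] by blast
    then show ?thesis using 4 H_le0[of 0] by simp
  qed
qed

lemmas T_meas[measurable] = T_rv

lemma H_meas[measurable]: "H \<in> borel_measurable borel"
proof -
  have "(\<lambda>u. - H u) \<in> borel_measurable borel"
    by (intro borel_measurable_mono) (auto simp: mono_def intro: H_anti)
  then have "(\<lambda>u. - (- H u)) \<in> borel_measurable borel" by measurable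
  then show ?thesis by simp
qed

lemma Y_meas[measurable]: "first_n X m \<in> measurable M (vecM m)"
  unfolding first_n_def by (intro measurable_restrict) (auto intro: X_rv)

lemma Ypre:
  assumes A: "A \<in> sets (vecM m)"
  shows "first_n X m -` A \<inter> space M \<in> {(\<lambda>\<omega>. \<lambda>k\<in>{1::nat..}. X k \<omega>) -` A \<inter> space M | A.
                      A \<in> sets (Pi\<^sub>M {1::nat..} (\<lambda>_. borel :: real measure))}"
proof -
  define A' where "A' = (\<lambda>f. restrict f {1..m}) -` A \<inter> space (Pi\<^sub>M {1::nat..} (\<lambda>_. borel :: real measure))"
  have "A' \<in> sets (Pi\<^sub>M {1::nat..} (\<lambda>_. borel :: real measure))"
    unfolding A'_def using A
    by (intro measurable_sets[OF measurable_restrict_subset]) auto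
  moreover have "(\<lambda>\<omega>. \<lambda>k\<in>{1::nat..}. X k \<omega>) -` A' \<inter> space M = first_n X m -` A \<inter> space M"
  proof -
    have "restrict (\<lambda>k\<in>{1::nat..}. X k \<omega>) {1..m} = first_n X m \<omega>" for \<omega>
      by (auto simp: first_n_def restrict_def fun_eq_iff)
    then show ?thesis unfolding A'_def by (auto simp: space_PiM)
  qed
  ultimately show ?thesis by blast
qed

lemma indepY: "distr M borel T \<Otimes>\<^sub>M distr M (vecM m) (first_n X m)
   = distr M (borel \<Otimes>\<^sub>M vecM m) (\<lambda>\<omega>. (T \<omega>, first_n X m \<omega>))"
proof (rule pair_measure_eqI)
  show "sigma_finite_measure (distr M borel T)"
    using prob_space_distr[OF T_rv] by (simp add: prob_space_imp_sigma_finite)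
  show "sigma_finite_measure (distr M (vecM m) (first_n X m))"
    using prob_space_distr[OF Y_meas[of m]] by (simp add: prob_space_imp_sigma_finite)
  show "sets (distr M borel T \<Otimes>\<^sub>M distr M (vecM m) (first_n X m)) = sets (distr M (borel \<Otimes>\<^sub>M vecM m) (\<lambda>\<omega>. (T \<omega>, first_n X m \<omega>)))"
    by simp
  fix A B assume A: "A \<in> sets (distr M borel T)" and B: "B \<in> sets (distr M (vecM m) (first_n X m))"
  have eqs: "(\<lambda>\<omega>. (T \<omega>, first_n X m \<omega>)) -` (A \<times> B) \<inter> space M = (T -` A \<inter> space M) \<inter> (first_n X m -` B \<inter> space M)"
    by auto
  have "prob ((T -` A \<inter> space M) \<inter> (first_n X m -` B \<inter> space M)) = prob (T -` A \<inter> space M) * prob (first_n X m -` B \<inter> space M)"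
  proof -
    have a: "T -` A \<inter> space M \<in> {T -` A \<inter> space M | A. A \<in> sets borel}" using A by auto
    have b: "first_n X m -` B \<inter> space M \<in> {(\<lambda>\<omega>. \<lambda>k\<in>{1::nat..}. X k \<omega>) -` A \<inter> space M | A.
                      A \<in> sets (Pi\<^sub>M {1::nat..} (\<lambda>_. borel :: real measure))}"
      using Ypre[of B m] B by simp
    have allp: "\<forall>a\<in>{T -` A \<inter> space M | A. A \<in> sets borel}. \<forall>b\<in>{(\<lambda>\<omega>. \<lambda>k\<in>{1::nat..}. X k \<omega>) -` A \<inter> space M | A.
                      A \<in> sets (Pi\<^sub>M {1::nat..} (\<lambda>_. borel :: real measure))}. prob (a \<inter> b) = prob a * prob b"
      by (rule conjunct2[OF conjunct2[OF indep[unfolded indep_sets2_eq]]])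
    show ?thesis using bspec[OF bspec[OF allp a] b] .
  qed
  then show "emeasure (distr M borel T) A * emeasure (distr M (vecM m) (first_n X m)) B =
         emeasure (distr M (borel \<Otimes>\<^sub>M vecM m) (\<lambda>\<omega>. (T \<omega>, first_n X m \<omega>))) (A \<times> B)"
  proof -
    have TY: "(\<lambda>\<omega>. (T \<omega>, first_n X m \<omega>)) \<in> measurable M (borel \<Otimes>\<^sub>M vecM m)"
      by (intro measurable_Pair T_rv Y_meas)
    have e1: "emeasure (distr M borel T) A = emeasure M (T -` A \<inter> space M)"
      by (rule emeasure_distr[OF T_rv]) (use A in simp)
    have e2: "emeasure (distr M (vecM m) (first_n X m)) B = emeasure M (first_n X m -` B \<inter> space M)"
      by (rule emeasure_distr[OF Y_meas]) (use B in simp)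
    have e3: "emeasure (distr M (borel \<Otimes>\<^sub>M vecM m) (\<lambda>\<omega>. (T \<omega>, first_n X m \<omega>))) (A \<times> B)
        = emeasure M ((\<lambda>\<omega>. (T \<omega>, first_n X m \<omega>)) -` (A \<times> B) \<inter> space M)"
      by (rule emeasure_distr[OF TY]) (use A B in simp)
    assume p: "prob ((T -` A \<inter> space M) \<inter> (first_n X m -` B \<inter> space M)) = prob (T -` A \<inter> space M) * prob (first_n X m -` B \<inter> space M)"
    show ?thesis unfolding e1 e2 e3 eqs emeasure_eq_measure p by (simp add: ennreal_mult')
  qed
qed

end


declare One_nat_def[simp del]
context setting begin

lemma indep_integral:
  assumes psi[measurable]: "\<psi> \<in> borel_measurable (vecM m)" and xi[measurable]: "\<xi> \<in> borel_measurable (vecM m)"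
  shows "(\<integral>\<^sup>+\<omega>. \<psi> (first_n X m \<omega>) * indicator {\<omega>\<in>space M. \<xi> (first_n X m \<omega>) \<le> T \<omega>} \<omega> \<partial>M)
       = (\<integral>\<^sup>+\<omega>. \<psi> (first_n X m \<omega>) * ennreal (H (\<xi> (first_n X m \<omega>))) \<partial>M)"
proof -
  let ?Y = "first_n X m"
  let ?PT = "distr M borel T" and ?PY = "distr M (vecM m) ?Y"
  have D: "?PT \<Otimes>\<^sub>M ?PY = distr M (borel \<Otimes>\<^sub>M vecM m) (\<lambda>\<omega>. (T \<omega>, ?Y \<omega>))"
    by (rule indepY)
  interpret PT: prob_space ?PT using T_rv by (rule prob_space_distr)
  interpret PY: prob_space ?PY by (rule prob_space_distr) measurable
  interpret PP: pair_sigma_finite ?PT ?PY by unfold_locales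
  define g where "g z = \<psi> (snd z) * indicator {p :: real \<times> (nat \<Rightarrow> real). \<xi> (snd p) \<le> fst p} z" for z
  have TY: "(\<lambda>\<omega>. (T \<omega>, first_n X m \<omega>)) \<in> measurable M (borel \<Otimes>\<^sub>M vecM m)"
    by (intro measurable_Pair T_rv Y_meas)
  have g[measurable]: "g \<in> borel_measurable (borel \<Otimes>\<^sub>M vecM m)"
    unfolding g_def by measurable
  have "(\<integral>\<^sup>+\<omega>. \<psi> (?Y \<omega>) * indicator {\<omega>\<in>space M. \<xi> (?Y \<omega>) \<le> T \<omega>} \<omega> \<partial>M)
      = (\<integral>\<^sup>+\<omega>. g (T \<omega>, ?Y \<omega>) \<partial>M)"
    by (intro nn_integral_cong) (auto simp: g_def split: split_indicator)
  also have "\<dots> = (\<integral>\<^sup>+z. g z \<partial>distr M (borel \<Otimes>\<^sub>M vecM m) (\<lambda>\<omega>. (T \<omega>, ?Y \<omega>)))"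
    by (rule nn_integral_distr[symmetric, OF TY], subst measurable_distr_eq1, rule g)
  also have "\<dots> = (\<integral>\<^sup>+z. g z \<partial>(?PT \<Otimes>\<^sub>M ?PY))" by (simp only: D)
  also have "\<dots> = (\<integral>\<^sup>+y. (\<integral>\<^sup>+t. g (t, y) \<partial>?PT) \<partial>?PY)"
    by (rule PP.nn_integral_snd[symmetric]) (simp add: g)
  also have "\<dots> = (\<integral>\<^sup>+y. \<psi> y * ennreal (H (\<xi> y)) \<partial>?PY)"
  proof (intro nn_integral_cong)
    fix y
    have "(\<integral>\<^sup>+t. g (t, y) \<partial>?PT) = (\<integral>\<^sup>+t. \<psi> y * indicator {\<xi> y..} t \<partial>?PT)"
      by (intro nn_integral_cong) (auto simp: g_def split: split_indicator)
    also have "\<dots> = \<psi> y * emeasure ?PT {\<xi> y..}" by (simp add: nn_integral_cmult_indicator)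
    also have "emeasure ?PT {\<xi> y..} = emeasure M {\<omega>\<in>space M. \<xi> y \<le> T \<omega>}"
      using T_rv by (subst emeasure_distr) (auto intro!: arg_cong[where f="emeasure M"])
    also have "\<dots> = ennreal (H (\<xi> y))" unfolding H_def using T_rv by (simp add: emeasure_eq_measure)
    finally show "(\<integral>\<^sup>+t. g (t, y) \<partial>?PT) = \<psi> y * ennreal (H (\<xi> y))" .
  qed
  also have "\<dots> = (\<integral>\<^sup>+\<omega>. \<psi> (?Y \<omega>) * ennreal (H (\<xi> (?Y \<omega>))) \<partial>M)"
    by (subst nn_integral_distr) auto
  finally show ?thesis .
qed

end

locale level = setting +
  fixes n :: nat and Nn :: "(nat \<Rightarrow> real) set" and \<mu> :: "(nat \<Rightarrow> real) \<Rightarrow> real measure"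
  assumes n1: "n \<ge> 1"
    and Nn_sets[measurable]: "Nn \<in> sets (vecM n)"
    and Nn_prob: "measure M {\<omega>\<in>space M. first_n X n \<omega> \<in> Nn} = 1"
    and reg: "N_reg_cond_dist M X n Nn \<mu>"
begin

definition mu' :: "(nat \<Rightarrow> real) \<Rightarrow> real measure" where
  "mu' x = (if x \<in> Nn then \<mu> x else return borel 0)"

lemma mu_prob: "x \<in> Nn \<Longrightarrow> prob_space (\<mu> x)" and mu_sets: "x \<in> Nn \<Longrightarrow> sets (\<mu> x) = sets borel"
  and mu_neg: "x \<in> Nn \<Longrightarrow> emeasure (\<mu> x) {..<0} = 0"
  using reg unfolding N_reg_cond_dist_def by auto

lemma mu'_prob: "prob_space (mu' x)" and mu'_sets: "sets (mu' x) = sets borel"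
  by (auto simp: mu'_def mu_prob mu_sets prob_space_return)

lemma mu'_neg: "emeasure (mu' x) {..<0} = 0"
  by (auto simp: mu'_def mu_neg emeasure_return)

lemma AE_mu'_nonneg: "AE y in mu' x. 0 \<le> y"
proof -
  have "{..<0::real} \<in> sets (mu' x)" by (simp add: mu'_sets)
  then have "AE y in mu' x. y \<notin> {..<0::real}"
    using mu'_neg[of x] by (intro AE_I[of _ _ "{..<0}"]) (auto simp: mu'_sets)
  then show ?thesis by (auto elim: AE_mp)
qed

lemma mu'_meas[measurable]: "mu' \<in> measurable (vecM n) (prob_algebra borel)"
proof (rule measurable_prob_algebra_generated[where \<Omega>=UNIV and G="sets borel"])
  show "sets borel = sigma_sets UNIV (sets (borel :: real measure))"
    using sets.sigma_sets_eq[of "borel :: real measure"] by simp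
  show "Int_stable (sets (borel :: real measure))" by (auto simp: Int_stable_def)
  show "sets (borel :: real measure) \<subseteq> Pow UNIV" by simp
  fix x show "prob_space (mu' x)" by (rule mu'_prob)
  show "sets (mu' x) = sets borel" by (rule mu'_sets)
next
  fix A :: "real set" assume A: "A \<in> sets borel"
  have m1: "(\<lambda>x. emeasure (\<mu> x) A) \<in> borel_measurable (restrict_space (vecM n) Nn)"
    using reg A unfolding N_reg_cond_dist_def by auto
  show "(\<lambda>a. emeasure (mu' a) A) \<in> borel_measurable (vecM n)"
    unfolding mu'_def
  proof -
    have "(\<lambda>a. if a \<in> Nn then emeasure (\<mu> a) A else emeasure (return borel 0) A) \<in> borel_measurable (vecM n)"
      by (subst measurable_If_restrict_space_iff) (use m1 in auto)
    then show "(\<lambda>a. emeasure (if a \<in> Nn then \<mu> a else return borel 0) A) \<in> borel_measurable (vecM n)"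
      by (rule measurable_cong[THEN iffD1, rotated]) auto
  qed
qed

lemma Pair_meas: "x \<in> space (vecM n) \<Longrightarrow> (\<lambda>y. (x, y)) \<in> measurable (mu' x) (vecM n \<Otimes>\<^sub>M borel)"
  by (subst measurable_cong_sets[OF mu'_sets refl]) (auto intro!: measurable_Pair)

abbreviation PY where "PY \<equiv> distr M (vecM n) (first_n X n)"

lemma AE_Nn: "AE \<omega> in M. first_n X n \<omega> \<in> Nn"
  using AE_prob_1[OF Nn_prob] by auto

lemma AE_PY_Nn: "AE x in PY. x \<in> Nn"
  using AE_Nn by (subst AE_distr_iff) auto

lemma Xn_meas[measurable]: "X (Suc n) \<in> borel_measurable M"
  by (rule X_rv) simp

lemma disint:
  assumes f[measurable]: "f \<in> borel_measurable (vecM n \<Otimes>\<^sub>M borel)"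
  shows "(\<integral>\<^sup>+\<omega>. f (first_n X n \<omega>, X (Suc n) \<omega>) \<partial>M) = (\<integral>\<^sup>+x. (\<integral>\<^sup>+y. f (x, y) \<partial>mu' x) \<partial>PY)"
proof -
  define K where "K x = distr (mu' x) (vecM n \<Otimes>\<^sub>M borel) (\<lambda>y. (x, y))" for x
  have K: "K \<in> measurable (vecM n) (subprob_algebra (vecM n \<Otimes>\<^sub>M borel))"
    unfolding K_def
    by (rule measurable_distr2[where M=borel]) (auto intro: measurable_prob_algebraD[OF mu'_meas])
  have KP: "K \<in> measurable PY (subprob_algebra (vecM n \<Otimes>\<^sub>M borel))"
    using K by (simp cong: measurable_cong_sets)
  have spPY: "space PY \<noteq> {}"
    using prob_space_distr[OF Y_meas[of n]] prob_space.not_empty by blast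
  have YX: "(\<lambda>\<omega>. (first_n X n \<omega>, X (Suc n) \<omega>)) \<in> measurable M (vecM n \<Otimes>\<^sub>M borel)"
    by (intro measurable_Pair Y_meas Xn_meas)
  let ?D = "distr M (vecM n \<Otimes>\<^sub>M borel) (\<lambda>\<omega>. (first_n X n \<omega>, X (Suc n) \<omega>))"
  let ?E = "{a \<times> b | a b. a \<in> sets (vecM n) \<and> b \<in> sets (borel :: real measure)}"
  let ?\<Omega> = "space (vecM n) \<times> (UNIV :: real set)"
  have eq: "?D = PY \<bind> K"
  proof (rule measure_eqI_generator_eq[where E="?E" and \<Omega>="?\<Omega>" and A="\<lambda>_. ?\<Omega>"])
    show "Int_stable ?E" by (rule Int_stable_pair_measure_generator)
    show "?E \<subseteq> Pow ?\<Omega>" using sets.sets_into_space by fastforce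
    show "sets ?D = sigma_sets ?\<Omega> ?E" by (simp add: sets_pair_measure)
    show "sets (PY \<bind> K) = sigma_sets ?\<Omega> ?E"
      using sets_bind_measurable[OF KP spPY] by (simp add: sets_pair_measure)
    show "range (\<lambda>_. ?\<Omega>) \<subseteq> ?E"
    proof -
      have "space (vecM n) \<in> sets (vecM n)" by simp
      moreover have "(UNIV :: real set) \<in> sets borel" by simp
      ultimately show ?thesis by blast
    qed
    show "(\<Union>i. ?\<Omega>) = ?\<Omega>" by simp
    show "emeasure ?D ?\<Omega> \<noteq> \<infinity>" for i :: nat
      using prob_space.emeasure_space_1[OF prob_space_distr[OF YX]] by (simp add: space_pair_measure)
  next
    fix C assume "C \<in> ?E"
    then obtain a b where C: "C = a \<times> b" and a[measurable]: "a \<in> sets (vecM n)" and b[measurable]: "b \<in> sets (borel :: real measure)"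
      by auto
    have "emeasure ?D C = emeasure M {\<omega>\<in>space M. first_n X n \<omega> \<in> a \<and> X (Suc n) \<omega> \<in> b}"
      unfolding C by (subst emeasure_distr[OF YX]) (auto intro!: arg_cong[where f="emeasure M"])
    also have "\<dots> = emeasure M {\<omega>\<in>space M. first_n X n \<omega> \<in> a \<inter> Nn \<and> X (Suc n) \<omega> \<in> b \<inter> {0..}}"
    proof (rule emeasure_eq_AE)
      show "AE \<omega> in M. (\<omega> \<in> {\<omega>\<in>space M. first_n X n \<omega> \<in> a \<and> X (Suc n) \<omega> \<in> b}) =
          (\<omega> \<in> {\<omega>\<in>space M. first_n X n \<omega> \<in> a \<inter> Nn \<and> X (Suc n) \<omega> \<in> b \<inter> {0..}})"
        using AE_Nn
      proof (rule AE_mp, intro AE_I2 impI)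
        fix \<omega> assume "\<omega> \<in> space M" "first_n X n \<omega> \<in> Nn"
        then show "(\<omega> \<in> {\<omega>\<in>space M. first_n X n \<omega> \<in> a \<and> X (Suc n) \<omega> \<in> b}) =
          (\<omega> \<in> {\<omega>\<in>space M. first_n X n \<omega> \<in> a \<inter> Nn \<and> X (Suc n) \<omega> \<in> b \<inter> {0..}})"
          using X_nonneg[of "Suc n" \<omega>] by auto
      qed
    qed measurable
    also have "\<dots> = (\<integral>\<^sup>+x. emeasure (\<mu> x) (b \<inter> {0..}) * indicator (a \<inter> Nn) x \<partial>PY)"
    proof -
      have disf: "\<forall>A\<in>sets (vecM n). A \<subseteq> Nn \<longrightarrow> (\<forall>B\<in>sets borel. B \<subseteq> {0..} \<longrightarrow>
        emeasure M {\<omega>\<in>space M. first_n X n \<omega> \<in> A \<and> X (Suc n) \<omega> \<in> B}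
          = (\<integral>\<^sup>+x. emeasure (\<mu> x) B * indicator A x \<partial>PY))"
        using reg unfolding N_reg_cond_dist_def by (elim conjE)
      have 1: "a \<inter> Nn \<in> sets (vecM n)" by measurable
      have 2: "b \<inter> {0..} \<in> sets borel" by measurable
      show ?thesis by (rule disf[rule_format, OF 1 _ 2]) auto
    qed
    also have "\<dots> = (\<integral>\<^sup>+x. emeasure (K x) C \<partial>PY)"
    proof (rule nn_integral_cong_AE)
      show "AE x in PY. emeasure (\<mu> x) (b \<inter> {0..}) * indicator (a \<inter> Nn) x = emeasure (K x) C"
        using AE_PY_Nn
      proof (rule AE_mp, intro AE_I2 impI)
        fix x assume x: "x \<in> space PY" "x \<in> Nn"
        have "emeasure (K x) C = emeasure (mu' x) ((\<lambda>y. (x, y)) -` C \<inter> space (mu' x))"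
          unfolding K_def using x by (intro emeasure_distr Pair_meas) (auto simp: C)
        also have "\<dots> = indicator a x * emeasure (\<mu> x) b"
          using x by (auto simp: C mu'_def mu_sets split: split_indicator)
        also have "emeasure (\<mu> x) b = emeasure (\<mu> x) (b \<inter> {0..})"
        proof -
          have bs: "b \<inter> {0..} \<in> sets (\<mu> x)" "b \<inter> {..<0} \<in> sets (\<mu> x)" using x by (auto simp: mu_sets)
          have "emeasure (\<mu> x) (b \<inter> {0..}) + emeasure (\<mu> x) (b \<inter> {..<0}) = emeasure (\<mu> x) ((b \<inter> {0..}) \<union> (b \<inter> {..<0}))"
            by (rule plus_emeasure[OF bs]) auto
          moreover have "(b \<inter> {0..}) \<union> (b \<inter> {..<0}) = b" by auto
          ultimately have "emeasure (\<mu> x) b = emeasure (\<mu> x) (b \<inter> {0..}) + emeasure (\<mu> x) (b \<inter> {..<0})" by simp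
          moreover have "emeasure (\<mu> x) (b \<inter> {..<0}) \<le> emeasure (\<mu> x) {..<0}"
            using x by (intro emeasure_mono) (auto simp: mu_sets)
          ultimately show ?thesis using mu_neg[OF x(2)] by simp
        qed
        finally show "emeasure (\<mu> x) (b \<inter> {0..}) * indicator (a \<inter> Nn) x = emeasure (K x) C"
          using x by (simp split: split_indicator)
      qed
    qed
    also have "\<dots> = emeasure (PY \<bind> K) C"
      using a b by (intro emeasure_bind[symmetric, OF spPY KP]) (auto simp: C intro!: pair_measureI)
    finally show "emeasure ?D C = emeasure (PY \<bind> K) C" .
  qed
  have "(\<integral>\<^sup>+\<omega>. f (first_n X n \<omega>, X (Suc n) \<omega>) \<partial>M) = (\<integral>\<^sup>+z. f z \<partial>?D)"
    by (rule nn_integral_distr[symmetric, OF YX]) simp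
  also have "\<dots> = (\<integral>\<^sup>+z. f z \<partial>(PY \<bind> K))" by (simp only: eq)
  also have "\<dots> = (\<integral>\<^sup>+x. (\<integral>\<^sup>+z. f z \<partial>K x) \<partial>PY)"
    by (rule nn_integral_bind[OF _ KP]) simp
  also have "\<dots> = (\<integral>\<^sup>+x. (\<integral>\<^sup>+y. f (x, y) \<partial>mu' x) \<partial>PY)"
    unfolding K_def by (intro nn_integral_cong) (subst nn_integral_distr; simp add: mu'_sets cong: measurable_cong_sets)
  finally show ?thesis .
qed

end


declare One_nat_def[simp del]

lemma Inter_Ioi_shift: "(\<Inter>k. {a - 1 / real (Suc k) <..}) = {a::real..}"
proof (auto)
  fix x assume "a \<le> x" then show "a - 1 / (1 + real k) < x" for k
    by (smt (verit) divide_pos_pos of_nat_0_le_iff)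
next
  fix x assume h: "\<forall>k. a - 1 / (1 + real k) < x"
  show "a \<le> x"
  proof (rule ccontr)
    assume "\<not> a \<le> x"
    then obtain k where "inverse (real (Suc k)) < a - x"
      using reals_Archimedean by (metis diff_gt_0_iff_gt not_le)
    with h[rule_format, of k] show False by (simp add: field_simps)
  qed
qed

lemma st_le_upset:
  fixes \<mu> \<nu> :: "real measure"
  assumes P\<mu>: "prob_space \<mu>" and P\<nu>: "prob_space \<nu>" and s\<mu>: "sets \<mu> = sets borel" and s\<nu>: "sets \<nu> = sets borel"
    and st: "st_le \<mu> \<nu>" and U: "U \<in> sets borel" and up: "\<And>u v. u \<in> U \<Longrightarrow> u \<le> v \<Longrightarrow> v \<in> U"
  shows "measure \<mu> U \<le> measure \<nu> U"
proof -
  interpret A: prob_space \<mu> by (rule P\<mu>)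
  interpret B: prob_space \<nu> by (rule P\<nu>)
  have spm: "space \<mu> = UNIV" using sets_eq_imp_space_eq[OF s\<mu>] by simp
  have spn: "space \<nu> = UNIV" using sets_eq_imp_space_eq[OF s\<nu>] by simp
  have st': "measure \<mu> {t<..} \<le> measure \<nu> {t<..}" for t using st unfolding st_le_def by auto
  consider "U = {}" | "U = UNIV" | "U \<noteq> {}" "U \<noteq> UNIV" by blast
  then show ?thesis
  proof cases
    case 1 then show ?thesis by simp
  next
    case 2 then show ?thesis using A.prob_space B.prob_space spm spn by simp
  next
    case 3
    then obtain z where z: "z \<notin> U" by blast
    have zl: "z < u" if "u \<in> U" for u
      using up[OF that, of z] z by force
    then have bdd: "bdd_below U" by (auto simp: bdd_below_def intro: less_imp_le)
    define a where "a = Inf U"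
    have ge: "a \<le> u" if "u \<in> U" for u using cInf_lower[OF that bdd] a_def by simp
    have gt: "x \<in> U" if "a < x" for x
    proof -
      from that have "Inf U < x" by (simp add: a_def)
      then obtain u where "u \<in> U" "u < x" using cInf_less_iff[OF \<open>U \<noteq> {}\<close> bdd] by auto
      then show ?thesis using up by auto
    qed
    show ?thesis
    proof (cases "a \<in> U")
      case False
      have "x \<in> U \<longleftrightarrow> a < x" for x
        using ge[of x] gt[of x] False by (cases "x = a") (auto simp: less_le)
      then have "U = {a<..}" by auto
      then show ?thesis using st' by simp
    next
      case True
      have "x \<in> U \<longleftrightarrow> a \<le> x" for x
        using ge[of x] gt[of x] True by (cases "x = a") (auto simp: le_less)
      then have Ueq: "U = {a..}" by auto
      define S where "S k = {a - 1 / real (Suc k) <..}" for k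
      have dec: "decseq S" unfolding S_def
        by (rule decseq_SucI) (auto simp: frac_le)
      have "(\<lambda>k. measure \<nu> (S k)) \<longlonglongrightarrow> measure \<nu> (\<Inter>k. S k)"
        by (intro Lim_measure_decseq dec) (auto simp: S_def s\<nu>)
      then have lim: "(\<lambda>k. measure \<nu> (S k)) \<longlonglongrightarrow> measure \<nu> U"
        unfolding S_def Inter_Ioi_shift Ueq .
      have "measure \<mu> U \<le> measure \<nu> (S k)" for k
      proof -
        have "measure \<mu> U \<le> measure \<mu> (S k)"
        proof -
          have p: "a - 1 / real (Suc k) < a" by simp
          have "{a..} \<subseteq> S k" unfolding S_def
          proof
            fix x assume "x \<in> {a..}"
            then have "a \<le> x" by simp
            with p show "x \<in> {a - 1 / real (Suc k)<..}" by (simp only: greaterThan_iff)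
          qed
          then show ?thesis unfolding Ueq by (intro A.finite_measure_mono) (auto simp: S_def s\<mu>)
        qed
        also have "\<dots> \<le> measure \<nu> (S k)" unfolding S_def by (rule st')
        finally show ?thesis .
      qed
      then show ?thesis by (intro LIMSEQ_le_const[OF lim]) auto
    qed
  qed
qed


lemma antimono_meas: "antimono (h :: real \<Rightarrow> real) \<Longrightarrow> h \<in> borel_measurable borel"
proof -
  assume a: "antimono h"
  have "(\<lambda>u. - h u) \<in> borel_measurable borel"
    using a by (intro borel_measurable_mono) (auto simp: mono_def antimono_def)
  then have "(\<lambda>u. - (- h u)) \<in> borel_measurable borel" by measurable
  then show ?thesis by simp
qed

lemma layer_cake_le:
  fixes \<mu> :: "real measure" and h :: "real \<Rightarrow> real"
  assumes s\<mu>: "sets \<mu> = sets borel" and sf: "sigma_finite_measure \<mu>"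
    and hm[measurable]: "h \<in> borel_measurable borel" and h0: "\<And>y. 0 \<le> h y"
  shows "(\<integral>\<^sup>+y. ennreal (h y) \<partial>\<mu>) = (\<integral>\<^sup>+u. indicator {0<..} u * emeasure \<mu> {y. u < h y} \<partial>lborel)"
proof -
  interpret sigma_finite_measure \<mu> by (rule sf)
  interpret PP: pair_sigma_finite lborel \<mu> by unfold_locales
  define G :: "real \<times> real \<Rightarrow> ennreal" where "G p = indicator {0<..} (fst p) * indicator {q :: real \<times> real. fst q < h (snd q)} p" for p
  have Gm: "G \<in> borel_measurable (lborel \<Otimes>\<^sub>M \<mu>)"
  proof -
    have "G \<in> borel_measurable (lborel \<Otimes>\<^sub>M borel)" unfolding G_def by measurable
    then show ?thesis by (subst measurable_cong_sets[OF sets_pair_measure_cong[OF refl s\<mu>] refl])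
  qed
  have "(\<integral>\<^sup>+y. ennreal (h y) \<partial>\<mu>) = (\<integral>\<^sup>+y. (\<integral>\<^sup>+u. G (u, y) \<partial>lborel) \<partial>\<mu>)"
  proof (intro nn_integral_cong)
    fix y
    have "(\<integral>\<^sup>+u. G (u, y) \<partial>lborel) = (\<integral>\<^sup>+u. indicator {0<..<h y} u \<partial>lborel)"
      by (intro nn_integral_cong) (auto simp: G_def split: split_indicator)
    also have "\<dots> = ennreal (h y)" using h0[of y] by simp
    finally show "ennreal (h y) = (\<integral>\<^sup>+u. G (u, y) \<partial>lborel)" ..
  qed
  also have "\<dots> = (\<integral>\<^sup>+u. (\<integral>\<^sup>+y. G (u, y) \<partial>\<mu>) \<partial>lborel)"
    by (rule PP.Fubini[OF Gm])
  also have "\<dots> = (\<integral>\<^sup>+u. indicator {0<..} u * emeasure \<mu> {y. u < h y} \<partial>lborel)"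
  proof (intro nn_integral_cong)
    fix u
    have "{y. u < h y} \<in> sets \<mu>" unfolding s\<mu> by measurable
    then show "(\<integral>\<^sup>+y. G (u, y) \<partial>\<mu>) = indicator {0<..} u * emeasure \<mu> {y. u < h y}"
    proof -
      have "(\<integral>\<^sup>+y. G (u, y) \<partial>\<mu>) = (\<integral>\<^sup>+y. indicator {0<..} u * indicator {y. u < h y} y \<partial>\<mu>)"
        by (intro nn_integral_cong) (simp add: G_def indicator_def)
      also have "\<dots> = indicator {0<..} u * emeasure \<mu> {y. u < h y}"
        using \<open>{y. u < h y} \<in> sets \<mu>\<close> by (rule nn_integral_cmult_indicator)
      finally show ?thesis .
    qed
  qed
  finally show ?thesis .
qed

lemma st_le_integral:
  fixes \<mu> \<nu> :: "real measure" and h :: "real \<Rightarrow> real"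
  assumes P\<mu>: "prob_space \<mu>" and P\<nu>: "prob_space \<nu>" and s\<mu>: "sets \<mu> = sets borel" and s\<nu>: "sets \<nu> = sets borel"
    and st: "st_le \<mu> \<nu>" and anti: "antimono h" and h0: "\<And>y. 0 \<le> h y"
  shows "(\<integral>\<^sup>+y. ennreal (h y) \<partial>\<nu>) \<le> (\<integral>\<^sup>+y. ennreal (h y) \<partial>\<mu>)"
proof -
  interpret A: prob_space \<mu> by (rule P\<mu>)
  interpret B: prob_space \<nu> by (rule P\<nu>)
  have hm[measurable]: "h \<in> borel_measurable borel" by (rule antimono_meas[OF anti])
  have spm: "space \<mu> = UNIV" using sets_eq_imp_space_eq[OF s\<mu>] by simp
  have spn: "space \<nu> = UNIV" using sets_eq_imp_space_eq[OF s\<nu>] by simp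
  have cmp: "emeasure \<nu> {y. u < h y} \<le> emeasure \<mu> {y. u < h y}" for u
  proof -
    let ?U = "UNIV - {y. u < h y}"
    have Ub: "?U \<in> sets borel" by measurable
    have up: "w \<in> ?U" if "v \<in> ?U" "v \<le> w" for v w
      using that anti by (auto simp: antimono_def) (meson order.strict_trans2)
    have le: "measure \<mu> ?U \<le> measure \<nu> ?U" by (rule st_le_upset[OF P\<mu> P\<nu> s\<mu> s\<nu> st Ub up])
    have Db: "{y. u < h y} \<in> sets borel" by measurable
    have "measure \<mu> {y. u < h y} = 1 - measure \<mu> ?U"
      using A.prob_compl[of "{y. u < h y}"] Db by (simp add: spm s\<mu>)
    moreover have "measure \<nu> {y. u < h y} = 1 - measure \<nu> ?U"
      using B.prob_compl[of "{y. u < h y}"] Db by (simp add: spn s\<nu>)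
    ultimately have "measure \<nu> {y. u < h y} \<le> measure \<mu> {y. u < h y}" using le by simp
    then show ?thesis by (simp add: A.emeasure_eq_measure B.emeasure_eq_measure)
  qed
  have "(\<integral>\<^sup>+y. ennreal (h y) \<partial>\<nu>) = (\<integral>\<^sup>+u. indicator {0<..} u * emeasure \<nu> {y. u < h y} \<partial>lborel)"
    by (rule layer_cake_le[OF s\<nu> _ hm h0]) (rule B.sigma_finite_measure_axioms)
  also have "\<dots> \<le> (\<integral>\<^sup>+u. indicator {0<..} u * emeasure \<mu> {y. u < h y} \<partial>lborel)"
    by (intro nn_integral_mono mult_left_mono cmp) auto
  also have "\<dots> = (\<integral>\<^sup>+y. ennreal (h y) \<partial>\<mu>)"
    by (rule layer_cake_le[OF s\<mu> _ hm h0, symmetric]) (rule A.sigma_finite_measure_axioms)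
  finally show ?thesis .
qed



declare One_nat_def[simp del]

definition ssum :: "nat \<Rightarrow> (nat \<Rightarrow> real) \<Rightarrow> real" where "ssum n x = (\<Sum>i\<in>{1..n}. x i)"

lemma ssum_meas[measurable]: "ssum n \<in> borel_measurable (vecM n)"
  unfolding ssum_def by measurable

context setting begin

lemma ps_Y: "partial_sum X n \<omega> = ssum n (first_n X n \<omega>)"
  unfolding partial_sum_def ssum_def first_n_def by (intro sum.cong) auto

lemma ps_Suc: "partial_sum X (Suc n) \<omega> = partial_sum X n \<omega> + X (Suc n) \<omega>"
  unfolding partial_sum_def by (simp add: sum.cl_ivl_Suc)

lemma ps_nonneg: "\<omega> \<in> space M \<Longrightarrow> 0 \<le> partial_sum X n \<omega>"
  unfolding partial_sum_def by (intro sum_nonneg X_nonneg) auto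

lemma ps_mono: "\<omega> \<in> space M \<Longrightarrow> m \<le> n \<Longrightarrow> partial_sum X m \<omega> \<le> partial_sum X n \<omega>"
  unfolding partial_sum_def by (intro sum_mono2 X_nonneg) auto

lemma ps_meas[measurable]: "partial_sum X n \<in> borel_measurable M"
proof -
  have "(\<lambda>\<omega>. ssum n (first_n X n \<omega>)) \<in> borel_measurable M" by measurable
  then show ?thesis by (simp add: ps_Y[abs_def])
qed

lemma counting_ge: "\<omega> \<in> space M \<Longrightarrow> (enat n \<le> counting X (T \<omega>) \<omega>) \<longleftrightarrow> partial_sum X n \<omega> \<le> T \<omega>"
proof
  assume \<omega>: "\<omega> \<in> space M" and le: "enat n \<le> counting X (T \<omega>) \<omega>"
  show "partial_sum X n \<omega> \<le> T \<omega>"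
  proof (cases n)
    case 0 then show ?thesis using T_nonneg[OF \<omega>] by (simp add: partial_sum_def)
  next
    case (Suc m)
    then have "enat m < counting X (T \<omega>) \<omega>" using le by (metis Suc_ile_eq)
    then obtain k where k: "enat m < enat k" "partial_sum X k \<omega> \<le> T \<omega>"
      unfolding counting_def less_Sup_iff by auto
    then have "n \<le> k" using Suc by simp
    then show ?thesis using ps_mono[OF \<omega> \<open>n \<le> k\<close>] k by simp
  qed
next
  assume "partial_sum X n \<omega> \<le> T \<omega>"
  then show "enat n \<le> counting X (T \<omega>) \<omega>"
    unfolding counting_def by (intro Sup_upper) auto
qed

lemma p_H: "emeasure M {\<omega>\<in>space M. partial_sum X n \<omega> \<le> T \<omega>} = (\<integral>\<^sup>+\<omega>. ennreal (H (partial_sum X n \<omega>)) \<partial>M)"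
proof -
  have "emeasure M {\<omega>\<in>space M. partial_sum X n \<omega> \<le> T \<omega>}
      = (\<integral>\<^sup>+\<omega>. (\<lambda>_. 1::ennreal) (first_n X n \<omega>) * indicator {\<omega>\<in>space M. ssum n (first_n X n \<omega>) \<le> T \<omega>} \<omega> \<partial>M)"
    by (simp add: ps_Y[symmetric])
  also have "\<dots> = (\<integral>\<^sup>+\<omega>. (\<lambda>_. 1::ennreal) (first_n X n \<omega>) * ennreal (H (ssum n (first_n X n \<omega>))) \<partial>M)"
    by (rule indep_integral) auto
  finally show ?thesis by (simp add: ps_Y[symmetric])
qed

end

context level begin

definition KI :: "(nat \<Rightarrow> real) \<Rightarrow> ennreal" where
  "KI x = (\<integral>\<^sup>+y. ennreal (H (ssum n x + y)) \<partial>mu' x)"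
definition Kr :: "(nat \<Rightarrow> real) \<Rightarrow> real" where "Kr x = enn2real (KI x)"

lemma KI_meas[measurable]: "KI \<in> borel_measurable (vecM n)"
  unfolding KI_def
  by (rule nn_integral_measurable_subprob_algebra2[OF _ measurable_prob_algebraD[OF mu'_meas]]) measurable

lemma Kr_meas[measurable]: "Kr \<in> borel_measurable (vecM n)"
  unfolding Kr_def by measurable

lemma KI_le: "KI x \<le> ennreal (H (ssum n x))"
proof -
  interpret P: prob_space "mu' x" by (rule mu'_prob)
  have "KI x \<le> (\<integral>\<^sup>+y. ennreal (H (ssum n x)) \<partial>mu' x)"
    unfolding KI_def
    by (intro nn_integral_mono_AE, rule AE_mp[OF AE_mu'_nonneg[of x]]) (auto intro!: AE_I2 ennreal_leI H_anti)
  also have "\<dots> = ennreal (H (ssum n x))" by (simp add: P.emeasure_space_1)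
  finally show ?thesis .
qed

lemma KI_eq: "KI x = ennreal (Kr x)"
proof -
  have "KI x < top" using KI_le[of x] by (simp add: le_less_trans)
  then show ?thesis unfolding Kr_def by (simp add: less_top)
qed

lemma Kr_nonneg: "0 \<le> Kr x" by (simp add: Kr_def)
lemma Kr_le: "Kr x \<le> H (ssum n x)"
  using KI_le[of x] H_nonneg by (simp add: KI_eq)

lemma K1w:
  assumes w[measurable]: "w \<in> borel_measurable (vecM n)" and w0: "\<And>x. 0 \<le> w x"
  shows "(\<integral>\<^sup>+\<omega>. ennreal (w (first_n X n \<omega>) * H (partial_sum X (Suc n) \<omega>)) \<partial>M)
       = (\<integral>\<^sup>+\<omega>. ennreal (w (first_n X n \<omega>) * Kr (first_n X n \<omega>)) \<partial>M)"
proof -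
  define f where "f p = ennreal (w (fst p) * H (ssum n (fst p) + snd p))" for p :: "(nat \<Rightarrow> real) \<times> real"
  have f[measurable]: "f \<in> borel_measurable (vecM n \<Otimes>\<^sub>M borel)" unfolding f_def by measurable
  have "(\<integral>\<^sup>+\<omega>. ennreal (w (first_n X n \<omega>) * H (partial_sum X (Suc n) \<omega>)) \<partial>M)
      = (\<integral>\<^sup>+\<omega>. f (first_n X n \<omega>, X (Suc n) \<omega>) \<partial>M)"
    unfolding ps_Suc unfolding ps_Y f_def by simp
  also have "\<dots> = (\<integral>\<^sup>+x. (\<integral>\<^sup>+y. f (x, y) \<partial>mu' x) \<partial>PY)" by (rule disint[OF f])
  also have "\<dots> = (\<integral>\<^sup>+x. ennreal (w x * Kr x) \<partial>PY)"
  proof (intro nn_integral_cong)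
    fix x
    have "(\<integral>\<^sup>+y. f (x, y) \<partial>mu' x) = (\<integral>\<^sup>+y. ennreal (w x) * ennreal (H (ssum n x + y)) \<partial>mu' x)"
      by (intro nn_integral_cong) (simp add: f_def ennreal_mult w0 H_nonneg)
    also have "\<dots> = ennreal (w x) * KI x" unfolding KI_def
      by (rule nn_integral_cmult) (simp add: mu'_sets cong: measurable_cong_sets)
    also have "\<dots> = ennreal (w x * Kr x)" by (simp add: KI_eq ennreal_mult w0 Kr_nonneg)
    finally show "(\<integral>\<^sup>+y. f (x, y) \<partial>mu' x) = ennreal (w x * Kr x)" .
  qed
  also have "\<dots> = (\<integral>\<^sup>+\<omega>. ennreal (w (first_n X n \<omega>) * Kr (first_n X n \<omega>)) \<partial>M)"
    by (subst nn_integral_distr) auto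
  finally show ?thesis .
qed

end


declare One_nat_def[simp del]

lemma CS_core:
  fixes M :: "'a measure" and a k :: "'a \<Rightarrow> real"
  assumes P: "prob_space M" and am[measurable]: "a \<in> borel_measurable M" and km[measurable]: "k \<in> borel_measurable M"
    and b: "\<And>\<omega>. \<omega> \<in> space M \<Longrightarrow> 0 \<le> k \<omega> \<and> k \<omega> \<le> a \<omega> \<and> a \<omega> \<le> 1"
  shows "(integral\<^sup>L M k)\<^sup>2 \<le> integral\<^sup>L M a * integral\<^sup>L M (\<lambda>\<omega>. k \<omega> * k \<omega> / a \<omega>)"
proof -
  interpret prob_space M by (rule P)
  have qb: "0 \<le> k \<omega> * k \<omega> / a \<omega> \<and> k \<omega> * k \<omega> / a \<omega> \<le> 1" if "\<omega> \<in> space M" for \<omega>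
  proof -
    from b[OF that] have h: "0 \<le> k \<omega>" "k \<omega> \<le> a \<omega>" "a \<omega> \<le> 1" by auto
    show ?thesis
    proof (cases "a \<omega> = 0")
      case True then show ?thesis by simp
    next
      case False
      then have ap: "a \<omega> > 0" using h by auto
      have "k \<omega> * k \<omega> / a \<omega> \<le> k \<omega> * a \<omega> / a \<omega>"
        using h ap by (intro divide_right_mono mult_left_mono) auto
      also have "\<dots> = k \<omega>" using ap by simp
      finally have "k \<omega> * k \<omega> / a \<omega> \<le> k \<omega>" .
      moreover have "0 \<le> k \<omega> * k \<omega> / a \<omega>" using h ap by simp
      ultimately show ?thesis using h by linarith
    qed
  qed
  have ia: "integrable M a"
  proof (rule integrable_const_bound[where B=1])
    show "AE x in M. norm (a x) \<le> 1" using b by (intro AE_I2) (smt (verit) real_norm_def)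
  qed simp
  have ik: "integrable M k"
  proof (rule integrable_const_bound[where B=1])
    show "AE x in M. norm (k x) \<le> 1" using b by (intro AE_I2) (smt (verit) real_norm_def)
  qed simp
  have iq: "integrable M (\<lambda>\<omega>. k \<omega> * k \<omega> / a \<omega>)"
  proof (rule integrable_const_bound[where B=1])
    show "AE x in M. norm (k x * k x / a x) \<le> 1"
    proof (rule AE_I2)
      fix x assume "x \<in> space M" from qb[OF this] show "norm (k x * k x / a x) \<le> 1"
        by (simp only: real_norm_def) (smt (verit))
    qed
  qed simp
  let ?A = "integral\<^sup>L M a" and ?K = "integral\<^sup>L M k" and ?Q = "integral\<^sup>L M (\<lambda>\<omega>. k \<omega> * k \<omega> / a \<omega>)"
  have K0: "0 \<le> ?K" using b by (intro integral_nonneg_AE AE_I2) auto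
  have Q0: "0 \<le> ?Q" using qb by (intro integral_nonneg_AE AE_I2) auto
  have KA: "?K \<le> ?A" using b by (intro integral_mono_AE ik ia AE_I2) auto
  show ?thesis
  proof (cases "?A = 0")
    case True
    then have "?K = 0" using K0 KA by simp
    then show ?thesis using True by simp
  next
    case False
    then have A0: "?A > 0" using K0 KA by simp
    define c where "c = ?K / ?A"
    have pw: "0 \<le> c\<^sup>2 * a \<omega> - 2 * c * k \<omega> + k \<omega> * k \<omega> / a \<omega>" if "\<omega> \<in> space M" for \<omega>
    proof (cases "a \<omega> = 0")
      case True then have "k \<omega> = 0" using b[OF that] by simp
      then show ?thesis using True by simp
    next
      case False
      have "c\<^sup>2 * a \<omega> - 2 * c * k \<omega> + k \<omega> * k \<omega> / a \<omega> = (c * a \<omega> - k \<omega>)\<^sup>2 / a \<omega>"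
        using False by (simp add: field_simps power2_eq_square)
      also have "\<dots> \<ge> 0" using b[OF that] by simp
      finally show ?thesis by simp
    qed
    have "0 \<le> integral\<^sup>L M (\<lambda>\<omega>. c\<^sup>2 * a \<omega> - 2 * c * k \<omega> + k \<omega> * k \<omega> / a \<omega>)"
      using pw by (intro integral_nonneg_AE AE_I2) auto
    also have "\<dots> = c\<^sup>2 * ?A - 2 * c * ?K + ?Q"
      using ia ik iq by simp
    finally have "0 \<le> c\<^sup>2 * ?A - 2 * c * ?K + ?Q" .
    then have "0 \<le> ?K\<^sup>2 / ?A - 2 * ?K\<^sup>2 / ?A + ?Q"
      using A0 by (simp add: c_def power2_eq_square field_simps)
    then have "?K\<^sup>2 / ?A \<le> ?Q" by (simp add: field_simps)
    then show ?thesis using A0 by (simp add: field_simps mult.commute)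
  qed
qed

lemma CS_enn:
  fixes M :: "'a measure" and a k :: "'a \<Rightarrow> real"
  assumes P: "prob_space M" and am[measurable]: "a \<in> borel_measurable M" and km[measurable]: "k \<in> borel_measurable M"
    and b: "\<And>\<omega>. \<omega> \<in> space M \<Longrightarrow> 0 \<le> k \<omega> \<and> k \<omega> \<le> a \<omega> \<and> a \<omega> \<le> 1"
    and pa: "ennreal pa = (\<integral>\<^sup>+\<omega>. ennreal (a \<omega>) \<partial>M)" and pk: "ennreal pk = (\<integral>\<^sup>+\<omega>. ennreal (k \<omega>) \<partial>M)"
    and pq: "(\<integral>\<^sup>+\<omega>. ennreal (k \<omega> * k \<omega> / a \<omega>) \<partial>M) \<le> ennreal pq"
    and nn: "0 \<le> pa" "0 \<le> pk" "0 \<le> pq"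
  shows "pk\<^sup>2 \<le> pa * pq"
proof -
  interpret prob_space M by (rule P)
  have ia: "integrable M a"
  proof (rule integrable_const_bound[where B=1])
    show "AE x in M. norm (a x) \<le> 1" using b by (intro AE_I2) (smt (verit) real_norm_def)
  qed simp
  have ik: "integrable M k"
  proof (rule integrable_const_bound[where B=1])
    show "AE x in M. norm (k x) \<le> 1" using b by (intro AE_I2) (smt (verit) real_norm_def)
  qed simp
  have qb: "0 \<le> k \<omega> * k \<omega> / a \<omega> \<and> k \<omega> * k \<omega> / a \<omega> \<le> 1" if "\<omega> \<in> space M" for \<omega>
  proof -
    from b[OF that] have h: "0 \<le> k \<omega>" "k \<omega> \<le> a \<omega>" "a \<omega> \<le> 1" by auto
    show ?thesis
    proof (cases "a \<omega> = 0")
      case True then show ?thesis by simp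
    next
      case False
      then have ap: "a \<omega> > 0" using h by auto
      have "k \<omega> * k \<omega> / a \<omega> \<le> k \<omega> * a \<omega> / a \<omega>"
        using h ap by (intro divide_right_mono mult_left_mono) auto
      also have "\<dots> = k \<omega>" using ap by simp
      finally have "k \<omega> * k \<omega> / a \<omega> \<le> k \<omega>" .
      moreover have "0 \<le> k \<omega> * k \<omega> / a \<omega>" using h ap by simp
      ultimately show ?thesis using h by linarith
    qed
  qed
  have iq: "integrable M (\<lambda>\<omega>. k \<omega> * k \<omega> / a \<omega>)"
  proof (rule integrable_const_bound[where B=1])
    show "AE x in M. norm (k x * k x / a x) \<le> 1"
    proof (rule AE_I2)
      fix x assume "x \<in> space M" from qb[OF this] show "norm (k x * k x / a x) \<le> 1"
        by (simp only: real_norm_def) (smt (verit))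
    qed
  qed simp
  have "ennreal pa = ennreal (integral\<^sup>L M a)"
    unfolding pa using b by (intro nn_integral_eq_integral ia AE_I2) (auto intro: order_trans)
  then have pa': "pa = integral\<^sup>L M a"
    using nn b by (subst (asm) ennreal_inj) (auto intro!: integral_nonneg_AE AE_I2 intro: order_trans)
  have "ennreal pk = ennreal (integral\<^sup>L M k)"
    unfolding pk using b by (intro nn_integral_eq_integral ik AE_I2) auto
  then have pk': "pk = integral\<^sup>L M k"
    using nn b by (subst (asm) ennreal_inj) (auto intro!: integral_nonneg_AE AE_I2)
  have "ennreal (integral\<^sup>L M (\<lambda>\<omega>. k \<omega> * k \<omega> / a \<omega>)) \<le> ennreal pq"
    using pq qb by (subst nn_integral_eq_integral[symmetric]) (auto intro!: iq AE_I2)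
  then have pq': "integral\<^sup>L M (\<lambda>\<omega>. k \<omega> * k \<omega> / a \<omega>) \<le> pq"
    using nn by (simp add: ennreal_le_iff)
  have "pk\<^sup>2 \<le> pa * integral\<^sup>L M (\<lambda>\<omega>. k \<omega> * k \<omega> / a \<omega>)"
    unfolding pa' pk' by (rule CS_core[OF P am km b])
  also have "\<dots> \<le> pa * pq" using pq' nn by (intro mult_left_mono) auto
  finally show ?thesis .
qed



declare One_nat_def[simp del]

context setting begin
lemma restrict_Y: "restrict (first_n X (Suc n) \<omega>) {1..n} = first_n X n \<omega>"
  by (auto simp: first_n_def restrict_def fun_eq_iff)
end
lemma ssum_Suc: "ssum (Suc n) x = ssum n (restrict x {1..n}) + x (Suc n)"
  unfolding ssum_def by (simp add: sum.cl_ivl_Suc)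

locale two = L1: level M X T n N1 m1 + L2: level M X T "Suc n" N2 m2
  for M :: "'a measure" and X T n N1 m1 N2 m2 +
  assumes N1_nonneg: "\<And>x i. x \<in> N1 \<Longrightarrow> i \<in> {1..n} \<Longrightarrow> 0 \<le> x i"
    and compat: "\<And>x. x \<in> N2 \<Longrightarrow> restrict x {1..n} \<in> N1 \<and> 0 \<le> x (Suc n)"
    and stc: "\<And>x. x \<in> N2 \<Longrightarrow> st_le (m2 x) (m1 (restrict x {1..n}))"
begin

lemmas [measurable] = L1.H_meas

lemma pw:
  assumes x': "x' \<in> N2"
  shows "L1.H (ssum (Suc n) x') * L1.Kr (restrict x' {1..n}) / L1.H (ssum n (restrict x' {1..n})) \<le> L2.Kr x'"
proof -
  define x where "x = restrict x' {1..n}"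
  define c where "c = ssum n x"
  define a where "a = x' (Suc n)"
  have xN: "x \<in> N1" and a0: "0 \<le> a" using compat[OF x'] by (auto simp: x_def a_def)
  have c0: "0 \<le> c" unfolding c_def ssum_def using N1_nonneg[OF xN] by (intro sum_nonneg) auto
  have sS: "ssum (Suc n) x' = c + a" by (simp add: ssum_Suc c_def x_def a_def)
  show ?thesis
  proof (cases "L1.H c = 0")
    case True then show ?thesis by (simp add: x_def[symmetric] c_def[symmetric] L2.Kr_nonneg)
  next
    case False
    then have Hc: "L1.H c > 0" using L1.H_nonneg[of c] by simp
    have m2: "L2.mu' x' = m2 x'" using x' by (simp add: L2.mu'_def)
    have m1: "L1.mu' x = m1 x" using xN by (simp add: L1.mu'_def)
    have "ennreal (L1.H (c + a) / L1.H c * L1.Kr x) = ennreal (L1.H (c + a) / L1.H c) * L1.KI x"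
      by (simp add: L1.KI_eq ennreal_mult[symmetric] L1.H_nonneg L1.Kr_nonneg)
    also have "\<dots> = (\<integral>\<^sup>+y. ennreal (L1.H (c + a) / L1.H c) * ennreal (L1.H (c + y)) \<partial>m1 x)"
      unfolding L1.KI_def c_def m1[symmetric]
      by (rule nn_integral_cmult[symmetric]) (simp add: L1.mu'_sets cong: measurable_cong_sets)
    also have "\<dots> \<le> (\<integral>\<^sup>+y. ennreal (L1.H (c + a + y)) \<partial>m1 x)"
    proof (rule nn_integral_mono_AE)
      show "AE y in m1 x. ennreal (L1.H (c + a) / L1.H c) * ennreal (L1.H (c + y)) \<le> ennreal (L1.H (c + a + y))"
        using L1.AE_mu'_nonneg[of x] unfolding m1
      proof (rule AE_mp, intro AE_I2 impI)
        fix y :: real assume y: "0 \<le> y"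
        have "L1.H (c + a) * L1.H (c + y) \<le> L1.H c * L1.H (c + a + y)" by (rule L1.H_logsup[OF c0 a0 y])
        then have "L1.H (c + a) / L1.H c * L1.H (c + y) \<le> L1.H (c + a + y)" using Hc
          by (simp add: field_simps)
        then show "ennreal (L1.H (c + a) / L1.H c) * ennreal (L1.H (c + y)) \<le> ennreal (L1.H (c + a + y))"
          by (simp add: ennreal_mult[symmetric] L1.H_nonneg Hc less_imp_le)
      qed
    qed
    also have "\<dots> \<le> (\<integral>\<^sup>+y. ennreal (L1.H (c + a + y)) \<partial>m2 x')"
    proof (rule st_le_integral)
      show "prob_space (m2 x')" "sets (m2 x') = sets borel" using L2.mu'_prob[of x'] L2.mu'_sets[of x'] m2 by auto
      show "prob_space (m1 x)" "sets (m1 x) = sets borel" using L1.mu'_prob[of x] L1.mu'_sets[of x] m1 by auto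
      show "st_le (m2 x') (m1 x)" using stc[OF x'] by (simp add: x_def)
      show "antimono (\<lambda>y. L1.H (c + a + y))" by (auto simp: antimono_def intro: L1.H_anti)
      show "0 \<le> L1.H (c + a + y)" for y by (rule L1.H_nonneg)
    qed
    also have "\<dots> = L2.KI x'" unfolding L2.KI_def m2 sS by (simp add: add.assoc)
    also have "\<dots> = ennreal (L2.Kr x')" by (rule L2.KI_eq)
    finally have "L1.H (c + a) / L1.H c * L1.Kr x \<le> L2.Kr x'"
      by (simp add: ennreal_le_iff L2.Kr_nonneg)
    then show ?thesis by (simp add: sS x_def[symmetric] c_def[symmetric] mult.commute)
  qed
qed

lemma step:
  "(\<integral>\<^sup>+\<omega>. ennreal (L1.Kr (first_n X n \<omega>) * L1.Kr (first_n X n \<omega>) / L1.H (partial_sum X n \<omega>)) \<partial>M)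
     \<le> emeasure M {\<omega>\<in>space M. partial_sum X (Suc (Suc n)) \<omega> \<le> T \<omega>}"
proof -
  define w where "w x = L1.Kr x / L1.H (ssum n x)" for x
  have w[measurable]: "w \<in> borel_measurable (vecM n)" unfolding w_def by measurable
  have w0: "0 \<le> w x" for x unfolding w_def by (simp add: L1.Kr_nonneg L1.H_nonneg)
  have "(\<integral>\<^sup>+\<omega>. ennreal (L1.Kr (first_n X n \<omega>) * L1.Kr (first_n X n \<omega>) / L1.H (partial_sum X n \<omega>)) \<partial>M)
      = (\<integral>\<^sup>+\<omega>. ennreal (w (first_n X n \<omega>) * L1.Kr (first_n X n \<omega>)) \<partial>M)"
    by (simp add: w_def L1.ps_Y[of n] mult.commute)
  also have "\<dots> = (\<integral>\<^sup>+\<omega>. ennreal (w (first_n X n \<omega>) * L1.H (partial_sum X (Suc n) \<omega>)) \<partial>M)"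
    by (rule L1.K1w[OF w w0, symmetric])
  also have "\<dots> \<le> (\<integral>\<^sup>+\<omega>. ennreal ((\<lambda>_. 1) (first_n X (Suc n) \<omega>) * L2.Kr (first_n X (Suc n) \<omega>)) \<partial>M)"
  proof (rule nn_integral_mono_AE)
    show "AE \<omega> in M. ennreal (w (first_n X n \<omega>) * L1.H (partial_sum X (Suc n) \<omega>))
        \<le> ennreal ((\<lambda>_. 1) (first_n X (Suc n) \<omega>) * L2.Kr (first_n X (Suc n) \<omega>))"
      using L2.AE_Nn
    proof (rule AE_mp, intro AE_I2 impI)
      fix \<omega> assume "first_n X (Suc n) \<omega> \<in> N2"
      from pw[OF this] show "ennreal (w (first_n X n \<omega>) * L1.H (partial_sum X (Suc n) \<omega>))
        \<le> ennreal ((\<lambda>_. 1) (first_n X (Suc n) \<omega>) * L2.Kr (first_n X (Suc n) \<omega>))"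
        by (intro ennreal_leI) (simp add: L1.restrict_Y w_def L1.ps_Y[of "Suc n"] mult.commute)
    qed
  qed
  also have "\<dots> = (\<integral>\<^sup>+\<omega>. ennreal ((\<lambda>_. 1) (first_n X (Suc n) \<omega>) * L1.H (partial_sum X (Suc (Suc n)) \<omega>)) \<partial>M)"
    by (rule L2.K1w[symmetric]) auto
  also have "\<dots> = emeasure M {\<omega>\<in>space M. partial_sum X (Suc (Suc n)) \<omega> \<le> T \<omega>}"
    by (simp add: L1.p_H)
  finally show ?thesis .
qed

end


locale one = level M X T 1 N1 m1
  for M :: "'a measure" and X T N1 m1 +
  assumes N1_nonneg: "\<And>x. x \<in> N1 \<Longrightarrow> 0 \<le> x 1"
    and st1: "\<And>x. x \<in> N1 \<Longrightarrow> st_le (m1 x) (distr M borel (X 1))"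
begin

lemma X1_meas[measurable]: "X 1 \<in> borel_measurable M" by (rule X_rv) simp

lemma n0:
  "ennreal (measure M {\<omega>\<in>space M. partial_sum X 1 \<omega> \<le> T \<omega>} * measure M {\<omega>\<in>space M. partial_sum X 1 \<omega> \<le> T \<omega>})
     \<le> emeasure M {\<omega>\<in>space M. partial_sum X 2 \<omega> \<le> T \<omega>}"
proof -
  define P1 where "P1 = measure M {\<omega>\<in>space M. partial_sum X 1 \<omega> \<le> T \<omega>}"
  have P10: "0 \<le> P1" by (simp add: P1_def)
  have ps1: "partial_sum X 1 \<omega> = X 1 \<omega>" for \<omega> by (simp add: partial_sum_def)
  have p1e: "(\<integral>\<^sup>+\<omega>. ennreal (H (X 1 \<omega>)) \<partial>M) = ennreal P1"
    using p_H[of 1] by (simp add: ps1 P1_def emeasure_eq_measure)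
  let ?PX = "distr M borel (X 1)"
  have PX: "prob_space ?PX" by (rule prob_space_distr) simp
  have AEX: "AE y in ?PX. 0 \<le> y"
    by (subst AE_distr_iff) (auto intro!: AE_I2 X_nonneg)
  have pwi: "ennreal (H (x 1) * P1) \<le> ennreal (Kr x)" if x: "x \<in> N1" for x
  proof -
    have x0: "0 \<le> x 1" by (rule N1_nonneg[OF x])
    have m1: "mu' x = m1 x" using x by (simp add: mu'_def)
    have "ennreal (H (x 1) * P1) = ennreal (H (x 1)) * (\<integral>\<^sup>+\<omega>. ennreal (H (X 1 \<omega>)) \<partial>M)"
      by (simp add: p1e ennreal_mult H_nonneg P10)
    also have "\<dots> = ennreal (H (x 1)) * (\<integral>\<^sup>+y. ennreal (H y) \<partial>?PX)"
      by (subst nn_integral_distr) auto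
    also have "\<dots> = (\<integral>\<^sup>+y. ennreal (H (x 1)) * ennreal (H y) \<partial>?PX)"
      by (rule nn_integral_cmult[symmetric]) simp
    also have "\<dots> \<le> (\<integral>\<^sup>+y. ennreal (H (x 1 + y)) \<partial>?PX)"
    proof (rule nn_integral_mono_AE)
      show "AE y in ?PX. ennreal (H (x 1)) * ennreal (H y) \<le> ennreal (H (x 1 + y))"
        using AEX
      proof (rule AE_mp, intro AE_I2 impI)
        fix y :: real assume y: "0 \<le> y"
        have "H (0 + x 1) * H (0 + y) \<le> H 0 * H (0 + x 1 + y)" by (rule H_logsup[OF _ x0 y]) simp
        then have "H (x 1) * H y \<le> H (x 1 + y)" using H_le0[of 0] by simp
        then show "ennreal (H (x 1)) * ennreal (H y) \<le> ennreal (H (x 1 + y))"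
          by (simp add: ennreal_mult[symmetric] H_nonneg)
      qed
    qed
    also have "\<dots> \<le> (\<integral>\<^sup>+y. ennreal (H (x 1 + y)) \<partial>m1 x)"
    proof (rule st_le_integral)
      show "prob_space (m1 x)" "sets (m1 x) = sets borel" using mu'_prob[of x] mu'_sets[of x] m1 by auto
      show "prob_space ?PX" by (rule PX)
      show "sets ?PX = sets borel" by simp
      show "st_le (m1 x) ?PX" by (rule st1[OF x])
      show "antimono (\<lambda>y. H (x 1 + y))" by (auto simp: antimono_def intro: H_anti)
      show "0 \<le> H (x 1 + y)" for y by (rule H_nonneg)
    qed
    also have "\<dots> = KI x" unfolding KI_def m1 by (simp add: ssum_def)
    also have "\<dots> = ennreal (Kr x)" by (rule KI_eq)
    finally show ?thesis .
  qed
  have "ennreal (P1 * P1) = ennreal P1 * (\<integral>\<^sup>+\<omega>. ennreal (H (X 1 \<omega>)) \<partial>M)"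
    by (simp add: p1e ennreal_mult P10)
  also have "\<dots> = (\<integral>\<^sup>+\<omega>. ennreal (H (X 1 \<omega>) * P1) \<partial>M)"
    by (subst nn_integral_cmult[symmetric]) (auto simp: ennreal_mult H_nonneg P10 mult.commute)
  also have "\<dots> \<le> (\<integral>\<^sup>+\<omega>. ennreal ((\<lambda>_. 1) (first_n X 1 \<omega>) * Kr (first_n X 1 \<omega>)) \<partial>M)"
  proof (rule nn_integral_mono_AE)
    show "AE \<omega> in M. ennreal (H (X 1 \<omega>) * P1) \<le> ennreal ((\<lambda>_. 1) (first_n X 1 \<omega>) * Kr (first_n X 1 \<omega>))"
      using AE_Nn
    proof (rule AE_mp, intro AE_I2 impI)
      fix \<omega> assume "first_n X 1 \<omega> \<in> N1"
      from pwi[OF this] show "ennreal (H (X 1 \<omega>) * P1) \<le> ennreal ((\<lambda>_. 1) (first_n X 1 \<omega>) * Kr (first_n X 1 \<omega>))"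
        by (simp add: first_n_def)
    qed
  qed
  also have "\<dots> = (\<integral>\<^sup>+\<omega>. ennreal ((\<lambda>_. 1) (first_n X 1 \<omega>) * H (partial_sum X (Suc 1) \<omega>)) \<partial>M)"
    by (rule K1w[symmetric]) auto
  also have "\<dots> = emeasure M {\<omega>\<in>space M. partial_sum X 2 \<omega> \<le> T \<omega>}"
    by (simp add: p_H numeral_2_eq_2)
  finally show ?thesis unfolding P1_def .
qed

end



declare One_nat_def[simp]


theorem proposition3p4:
  fixes M :: "'a measure" and X :: "nat \<Rightarrow> 'a \<Rightarrow> real" and T :: "'a \<Rightarrow> real"
  assumes "prob_space M"
    and X_rv: "\<And>k. k \<ge> 1 \<Longrightarrow> X k \<in> borel_measurable M"
    and X_nonneg: "\<And>k \<omega>. k \<ge> 1 \<Longrightarrow> \<omega> \<in> space M \<Longrightarrow> X k \<omega> \<ge> 0"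
    and T_rv: "T \<in> borel_measurable M"
    and T_nonneg: "\<And>\<omega>. \<omega> \<in> space M \<Longrightarrow> T \<omega> \<ge> 0"
    and indep: "prob_space.indep_set M
                  {T -` A \<inter> space M | A. A \<in> sets borel}
                  {(\<lambda>\<omega>. \<lambda>k\<in>{1::nat..}. X k \<omega>) -` A \<inter> space M | A.
                      A \<in> sets (Pi\<^sub>M {1::nat..} (\<lambda>_. borel :: real measure))}"
    and a: "DFR M T"
    and b: "\<not> (measure M {\<omega>\<in>space M. T \<omega> = 0} > 0 \<and> measure M {\<omega>\<in>space M. X 1 \<omega> = 0} > 0)"
    and c: "\<exists>(Nset :: nat \<Rightarrow> (nat \<Rightarrow> real) set) (\<mu> :: nat \<Rightarrow> (nat \<Rightarrow> real) \<Rightarrow> real measure).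
              (\<forall>n\<ge>1. Nset n \<in> sets (vecM n)
                 \<and> Nset n \<subseteq> {x. \<forall>i\<in>{1..n}. x i \<ge> 0}
                 \<and> measure M {\<omega>\<in>space M. first_n X n \<omega> \<in> Nset n} = 1
                 \<and> N_reg_cond_dist M X n (Nset n) (\<mu> n))
            \<and> (\<forall>x\<in>Nset 1. st_le (\<mu> 1 x) (distr M borel (X 1)))
            \<and> (\<forall>n\<ge>1. (\<forall>x\<in>Nset (Suc n). restrict x {1..n} \<in> Nset n \<and> x (Suc n) \<ge> 0)
                 \<and> (\<forall>x\<in>Nset (Suc n). st_le (\<mu> (Suc n) x) (\<mu> n (restrict x {1..n}))))"
  shows "discrete_DFR M (\<lambda>\<omega>. counting X (T \<omega>) \<omega>)"
proof -
  interpret S: setting M X T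
    by (intro setting.intro setting_axioms.intro) (use assms in auto)
  from c obtain Nset :: "nat \<Rightarrow> (nat \<Rightarrow> real) set" and \<mu> :: "nat \<Rightarrow> (nat \<Rightarrow> real) \<Rightarrow> real measure" where
    c1: "\<And>n. n \<ge> 1 \<Longrightarrow> Nset n \<in> sets (vecM n) \<and> Nset n \<subseteq> {x. \<forall>i\<in>{1..n}. x i \<ge> 0}
                 \<and> measure M {\<omega>\<in>space M. first_n X n \<omega> \<in> Nset n} = 1
                 \<and> N_reg_cond_dist M X n (Nset n) (\<mu> n)"
    and c2: "\<forall>x\<in>Nset 1. st_le (\<mu> 1 x) (distr M borel (X 1))"
    and c3: "\<And>n. n \<ge> 1 \<Longrightarrow> (\<forall>x\<in>Nset (Suc n). restrict x {1..n} \<in> Nset n \<and> x (Suc n) \<ge> 0)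
                 \<and> (\<forall>x\<in>Nset (Suc n). st_le (\<mu> (Suc n) x) (\<mu> n (restrict x {1..n})))"
    by blast
  have lev: "level M X T n (Nset n) (\<mu> n)" if "n \<ge> 1" for n
    using c1[OF that] that by (intro level.intro S.setting_axioms level_axioms.intro) auto
  define P where "P k = measure M {\<omega>\<in>space M. partial_sum X k \<omega> \<le> T \<omega>}" for k
  have P0: "0 \<le> P k" for k by (simp add: P_def)
  have Pe: "emeasure M {\<omega>\<in>space M. partial_sum X k \<omega> \<le> T \<omega>} = ennreal (P k)" for k
    by (simp add: P_def S.emeasure_eq_measure)
  have setq: "{\<omega>\<in>space M. enat k \<le> counting X (T \<omega>) \<omega>} = {\<omega>\<in>space M. partial_sum X k \<omega> \<le> T \<omega>}" for k
    using S.counting_ge by auto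
  have main: "(P (n + 1))\<^sup>2 \<le> P n * P (n + 2)" for n
  proof (cases "n = 0")
    case True
    interpret O: one M X T "Nset 1" "\<mu> 1"
    proof (intro one.intro lev one_axioms.intro)
      fix x assume "x \<in> Nset 1" then show "0 \<le> x 1" using c1[of 1] by auto
    next
      fix x assume "x \<in> Nset 1" then show "st_le (\<mu> 1 x) (distr M borel (X 1))" using c2 by auto
    qed simp
    have "{\<omega>\<in>space M. partial_sum X 0 \<omega> \<le> T \<omega>} = space M"
      using T_nonneg by (auto simp: partial_sum_def)
    then have "P 0 = 1" by (simp add: P_def S.prob_space)
    moreover have "ennreal (P 1 * P 1) \<le> ennreal (P 2)"
      using O.n0 by (simp add: P_def[symmetric] Pe)
    then have "P 1 * P 1 \<le> P 2" using P0 by (simp add: ennreal_le_iff)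
    ultimately show ?thesis using True by (simp add: power2_eq_square numeral_2_eq_2)
  next
    case False
    then have n1: "n \<ge> 1" by simp
    interpret L: two M X T n "Nset n" "\<mu> n" "Nset (Suc n)" "\<mu> (Suc n)"
    proof (intro two.intro lev two_axioms.intro)
      fix x i assume "x \<in> Nset n" "i \<in> {1..n}" then show "0 \<le> x i" using c1[OF n1] by auto
    next
      fix x assume "x \<in> Nset (Suc n)"
      then show "restrict x {1..n} \<in> Nset n \<and> 0 \<le> x (Suc n)" using c3[OF n1] by auto
    next
      fix x assume "x \<in> Nset (Suc n)"
      then show "st_le (\<mu> (Suc n) x) (\<mu> n (restrict x {1..n}))" using c3[OF n1] by auto
    qed (use n1 in auto)
    have am: "(\<lambda>\<omega>. S.H (partial_sum X n \<omega>)) \<in> borel_measurable M" by measurable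
    have km: "(\<lambda>\<omega>. L.L1.Kr (first_n X n \<omega>)) \<in> borel_measurable M" by measurable
    have "(P (Suc n))\<^sup>2 \<le> P n * P (Suc (Suc n))"
    proof (rule CS_enn[OF S.prob_space_axioms am km])
      fix \<omega> assume "\<omega> \<in> space M"
      show "0 \<le> L.L1.Kr (first_n X n \<omega>) \<and> L.L1.Kr (first_n X n \<omega>) \<le> S.H (partial_sum X n \<omega>) \<and> S.H (partial_sum X n \<omega>) \<le> 1"
        using L.L1.Kr_nonneg L.L1.Kr_le S.H_le1 by (simp add: S.ps_Y)
    next
      show "ennreal (P n) = (\<integral>\<^sup>+\<omega>. ennreal (S.H (partial_sum X n \<omega>)) \<partial>M)"
        using S.p_H[of n] by (simp add: Pe)
    next
      have "ennreal (P (Suc n)) = (\<integral>\<^sup>+\<omega>. ennreal ((\<lambda>_. 1) (first_n X n \<omega>) * S.H (partial_sum X (Suc n) \<omega>)) \<partial>M)"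
        using S.p_H[of "Suc n"] by (simp add: Pe)
      also have "\<dots> = (\<integral>\<^sup>+\<omega>. ennreal ((\<lambda>_. 1) (first_n X n \<omega>) * L.L1.Kr (first_n X n \<omega>)) \<partial>M)"
        by (rule L.L1.K1w) auto
      finally show "ennreal (P (Suc n)) = (\<integral>\<^sup>+\<omega>. ennreal (L.L1.Kr (first_n X n \<omega>)) \<partial>M)" by simp
    next
      show "(\<integral>\<^sup>+\<omega>. ennreal (L.L1.Kr (first_n X n \<omega>) * L.L1.Kr (first_n X n \<omega>) / S.H (partial_sum X n \<omega>)) \<partial>M) \<le> ennreal (P (Suc (Suc n)))"
        using L.step by (simp add: Pe)
    qed (auto simp: P0)
    then show ?thesis by (metis Suc_eq_plus1 add_2_eq_Suc')
  qed
  show ?thesis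
    unfolding discrete_DFR_def
  proof
    fix n :: nat
    show "(measure M {\<omega>\<in>space M. enat (n+1) \<le> counting X (T \<omega>) \<omega>})\<^sup>2
       \<le> measure M {\<omega>\<in>space M. enat n \<le> counting X (T \<omega>) \<omega>} * measure M {\<omega>\<in>space M. enat (n+2) \<le> counting X (T \<omega>) \<omega>}"
      unfolding setq P_def[symmetric] by (rule main)
  qed
qed

end
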